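(* Let $\mathbf{Q}=\begin{pmatrix} Q_{11} & Q_{12}\\ Q_{12} & Q_{22}\end{pmatrix}$ be a real symmetric positive definite $2\times 2$ matrix (the quantum Fisher information matrix of a two-parameter model with parameters $\lambda_1,\lambda_2$). Define the joint-estimation quantity $$\mu=\operatorname{Tr}[\mathbf{Q}^{-1}]=\frac{Q_{11}+Q_{22}}{Q_{11}Q_{22}-Q_{12}^2},$$ and, for $\gamma\in(0,1)$, the stepwise-estimation quantities $$\mu'(\gamma)=\frac{\operatorname{Tr}[\mathbf{W}_1\mathbf{Q}^{-1}]}{\gamma}+\frac{1}{(1-\gamma)Q_{22}}=\frac{Q_{22}}{\gamma\,(Q_{11}Q_{22}-Q_{12}^2)}+\frac{1}{(1-\gamma)Q_{22}},$$ $$\mu''(\gamma)=\frac{\operatorname{Tr}[\mathbf{W}_2\mathbf{Q}^{-1}]}{\gamma}+\frac{1}{(1-\gamma)Q_{11}}=\frac{Q_{11}}{\gamma\,(Q_{11}Q_{22}-Q_{12}^2)}+\frac{1}{(1-\gamma)Q_{11}},$$ where $\mathbf{W}_1=\operatorname{diag}(1,0)$ and $\mathbf{W}_2=\operatorname{diag}(0,1)$. If $$\frac{Q_{12}^2}{Q_{11}Q_{22}}>2\sqrt{2}-2,$$ then there exists $\gamma\in(0,1)$ such that $\min\big(\mu'(\gamma),\mu''(\gamma)\big)<\mu$; equivalently, $\tilde{\mu}:=\inf_{\gamma\in(0,1)}\min\big(\mu'(\gamma),\mu''(\gamma)\big)<\mu$.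
   Context: Interpretation: for $M$ measurement rounds, $\mu/M$ is the multiparameter quantum Cramér–Rao lower bound on $\Delta^2_{\hat\Lambda_1}+\Delta^2_{\hat\Lambda_2}$ for joint estimation of both parameters, while $\mu'(\gamma)/M$ (resp. $\mu''(\gamma)/M$) is the corresponding lower bound for the stepwise scheme that spends $\gamma M$ rounds estimating $\lambda_1$ (resp. $\lambda_2$) first and the remaining $(1-\gamma)M$ rounds estimating the other parameter as a single-parameter problem (with the first parameter's estimate replaced by its true value, as in the asymptotic limit). "Stepwise estimation outperforms joint estimation" means $\tilde\mu<\mu$. *)

theory Defs
  imports "HOL-Analysis.Analysis"
begin

definition pos_def_mat :: "real^2^2 \<Rightarrow> bool" where
  "pos_def_mat Q \<longleftrightarrow> (\<forall>x. x \<noteq> 0 \<longrightarrow> x \<bullet> (Q *v x) > 0)"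

definition W1 :: "real^2^2" where
  "W1 = (\<chi> i j. if i = 1 \<and> j = 1 then 1 else 0)"

definition W2 :: "real^2^2" where
  "W2 = (\<chi> i j. if i = 2 \<and> j = 2 then 1 else 0)"

definition mu_joint :: "real^2^2 \<Rightarrow> real" where
  "mu_joint Q = trace (matrix_inv Q)"

definition mu1 :: "real^2^2 \<Rightarrow> real \<Rightarrow> real" where
  "mu1 Q \<gamma> = trace (W1 ** matrix_inv Q) / \<gamma> + 1 / ((1 - \<gamma>) * Q $ 2 $ 2)"

definition mu2 :: "real^2^2 \<Rightarrow> real \<Rightarrow> real" where
  "mu2 Q \<gamma> = trace (W2 ** matrix_inv Q) / \<gamma> + 1 / ((1 - \<gamma>) * Q $ 1 $ 1)"

end

theory Submission
  imports Defs
begin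

lemma core:
  fixes a b c :: real
  assumes a: "a > 0" and b: "b > 0" and ba: "b \<le> a" and D: "a*b - c^2 > 0"
    and r: "c^2 / (a*b) > 2 * sqrt 2 - 2"
  shows "\<exists>\<gamma>::real. 0 < \<gamma> \<and> \<gamma> < 1 \<and> b/(\<gamma>*(a*b-c^2)) + 1/((1-\<gamma>)*b) < (a+b)/(a*b-c^2)"
proof -
  define s where "s = sqrt (a*b - c^2)"
  have s0: "s > 0" using D s_def by simp
  have ss: "s^2 = a*b - c^2" using D s_def by simp
  define rr where "rr = c^2/(a*b)"
  have ab: "a*b > 0" using a b by simp
  have c2: "c^2 = rr*(a*b)" using a b unfolding rr_def by (simp add: field_simps)
  have "rr + 2 > 2 * sqrt 2" using r rr_def by simp
  hence "(rr+2)^2 > (2* sqrt 2)^2"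
    by (smt (verit) power_strict_mono real_sqrt_ge_zero zero_less_numeral)
  hence key: "rr^2 + 4*rr - 4 > 0" by (simp add: power2_eq_square algebra_simps)
  have "(2*b* s)^2 = 4*b*b* s^2" by (simp add: power2_eq_square)
  also have "... \<le> 4*a*b* s^2" using ba b s0
    by (simp add: mult_right_mono)
  also have "... = 4*(a*b)^2*(1-rr)"
  proof -
    have "s^2 = a*b*(1-rr)" using ss c2 by (simp add: algebra_simps)
    thus ?thesis by (simp add: power2_eq_square)
  qed
  also have "... < (rr*(a*b))^2" using key ab
  proof -
    have "(rr*(a*b))^2 - 4*(a*b)^2*(1-rr) = (a*b)^2 * (rr^2 + 4*rr - 4)"
      by (simp add: power2_eq_square algebra_simps)
    moreover have "(a*b)^2 * (rr^2 + 4*rr - 4) > 0" using key ab by (intro mult_pos_pos) auto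
    ultimately show ?thesis by linarith
  qed
  finally have "(2*b* s)^2 < (c^2)^2" using c2 by simp
  hence lt: "2*b* s < c^2"
    by (meson power_less_imp_less_base zero_le_power2)
  define g where "g = b/(b+s)"
  have g0: "0 < g" and g1: "g < 1" using b s0 g_def by auto
  have omg: "1 - g = s/(b+s)" using b s0 g_def by (simp add: field_simps)
  have "b/(g*(a*b-c^2)) + 1/((1-g)*b) = (b+s)^2/(s^2*b)"
    unfolding omg g_def ss[symmetric] using b s0
    by (simp add: field_simps power2_eq_square)
  also have "... < (a+b)/s^2"
  proof -
    have "(b+s)^2 < b*(a+b)" using lt ss by (simp add: power2_eq_square algebra_simps)
    thus ?thesis using b s0 by (simp add: field_simps)
  qed
  finally show ?thesis using g0 g1 ss by metis
qed

theorem theorem1: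
  fixes Q :: "real^2^2"
  assumes "transpose Q = Q"
    and "pos_def_mat Q"
    and "(Q $ 1 $ 2)\<^sup>2 / (Q $ 1 $ 1 * Q $ 2 $ 2) > 2 * sqrt 2 - 2"
  shows "\<exists>\<gamma>::real. 0 < \<gamma> \<and> \<gamma> < 1 \<and> min (mu1 Q \<gamma>) (mu2 Q \<gamma>) < mu_joint Q"
proof -
  define a where "a = Q$1$1"
  define b where "b = Q$2$2"
  define c where "c = Q$1$2"
  have sym: "Q$2$1 = c"
  proof -
    have "transpose Q $1$2 = Q$2$1" by (simp add: transpose_def)
    thus ?thesis using assms(1) c_def by simp
  qed
  have qf0: "x \<bullet> (Q *v x) = x$1*x$1*Q$1$1 + x$1*x$2*(Q$1$2+Q$2$1) + x$2*x$2*Q$2$2" for x :: "real^2"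
    by (simp add: inner_vec_def matrix_vector_mult_def sum_2 algebra_simps)
  have qf: "x \<bullet> (Q *v x) = x$1*x$1*a + 2*x$1*x$2*c + x$2*x$2*b" for x :: "real^2"
    unfolding qf0 sym a_def b_def c_def by simp
  have pd: "x \<noteq> 0 \<Longrightarrow> x \<bullet> (Q *v x) > 0" for x using assms(2) pos_def_mat_def by blast
  define e1 :: "real^2" where "e1 = (\<chi> i. if i = 1 then 1 else 0)"
  define e2 :: "real^2" where "e2 = (\<chi> i. if i = 2 then 1 else 0)"
  have e1: "e1$1 = 1" "e1$2 = 0" and e2: "e2$1 = 0" "e2$2 = 1" unfolding e1_def e2_def by auto
  have "e1 \<noteq> 0" using e1 by auto
  hence a0: "a > 0" using pd[of e1] qf[of e1] e1 by simp
  have "e2 \<noteq> 0" using e2 by auto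
  hence b0: "b > 0" using pd[of e2] qf[of e2] e2 by simp
  define x :: "real^2" where "x = (\<chi> i. if i = 1 then -c else a)"
  have x1: "x$1 = -c" and x2: "x$2 = a" using x_def by auto
  have "x \<noteq> 0" using x2 a0 by auto
  hence "x \<bullet> (Q *v x) > 0" by (rule pd)
  hence "a*(a*b - c^2) > 0" unfolding qf x1 x2 by (simp add: power2_eq_square algebra_simps)
  hence D: "a*b - c^2 > 0" using a0 by (simp add: zero_less_mult_iff)
  define d where "d = a*b - c^2"
  define A :: "real^2^2" where "A = (\<chi> i j. if i = 1 \<and> j = 1 then b/d else if i = 2 \<and> j = 2 then a/d else -c/d)"
  have A11: "A$1$1 = b/d" and A22: "A$2$2 = a/d" and A12: "A$1$2 = -c/d" and A21: "A$2$1 = -c/d"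
    using A_def by auto
  have dn: "d \<noteq> 0" using D d_def by simp
  have QA: "Q ** A = mat 1"
    unfolding matrix_matrix_mult_def mat_def vec_eq_iff forall_2
    apply (simp add: sum_2 A11 A22 A12 A21 sym a_def[symmetric] b_def[symmetric] c_def[symmetric])
    using dn by (simp add: field_simps) (simp add: d_def algebra_simps power2_eq_square)
  have AQ: "A ** Q = mat 1"
    unfolding matrix_matrix_mult_def mat_def vec_eq_iff forall_2
    apply (simp add: sum_2 A11 A22 A12 A21 sym a_def[symmetric] b_def[symmetric] c_def[symmetric])
    using dn by (simp add: field_simps) (simp add: d_def algebra_simps power2_eq_square)
  have inv: "matrix_inv Q = A"
  proof -
    have ex: "\<exists>A'. Q ** A' = mat 1 \<and> A' ** Q = mat 1" using QA AQ by blast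
    define B where "B = matrix_inv Q"
    have B: "Q ** B = mat 1 \<and> B ** Q = mat 1"
      unfolding B_def matrix_inv_def by (rule someI_ex[OF ex])
    have "B = B ** (Q ** A)" using QA by (simp add: matrix_mul_rid)
    also have "... = (B ** Q) ** A" by (simp add: matrix_mul_assoc)
    also have "... = A" using B by (simp add: matrix_mul_lid)
    finally show ?thesis using B_def by simp
  qed
  have muj: "mu_joint Q = (a+b)/d"
    unfolding mu_joint_def inv trace_def sum_2 A11 A22 by (simp add: add_divide_distrib)
  have m1: "mu1 Q g = b/(g*d) + 1/((1-g)*b)" for g
    unfolding mu1_def inv trace_def sum_2 W1_def matrix_matrix_mult_def b_def[symmetric]
    by (simp add: sum_2 A11 A12 A21 A22)
  have m2: "mu2 Q g = a/(g*d) + 1/((1-g)*a)" for g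
    unfolding mu2_def inv trace_def sum_2 W2_def matrix_matrix_mult_def a_def[symmetric]
    by (simp add: sum_2 A11 A12 A21 A22)
  have r: "c^2/(a*b) > 2* sqrt 2 - 2" using assms(3) a_def b_def c_def by simp
  show ?thesis
  proof (cases "b \<le> a")
    case True
    from core[OF a0 b0 True D r] obtain g where "0 < g" "g < 1"
      "b/(g*(a*b-c^2)) + 1/((1-g)*b) < (a+b)/(a*b-c^2)" by blast
    thus ?thesis using m1 muj d_def by (metis min.strict_coboundedI1)
  next
    case False
    have r': "c^2/(b*a) > 2* sqrt 2 - 2" using r by (simp add: mult.commute)
    from core[OF b0 a0 _ _ r'] False D obtain g where "0 < g" "g < 1"
      "a/(g*(b*a-c^2)) + 1/((1-g)*a) < (b+a)/(b*a-c^2)" by (auto simp: mult.commute)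
    thus ?thesis using m2 muj d_def by (metis min.strict_coboundedI2 mult.commute add.commute)
  qed
qed

end
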